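(* Let $V$ be a $\mathcal{T}$-module which is free of rank $1$ as a $\mathcal{U}(\mathfrak{h})$-module, $\mathfrak{h}=\mathbb{C}L_0\oplus\mathbb{C}G_0$, with an even free generator $\mathbf{1}$, so that $V_{\bar0}=\mathbb{C}[L_0]\mathbf{1}$ and $V_{\bar1}=G_0\mathbb{C}[L_0]\mathbf{1}$. Write $f(\partial^2)\mathbf{1}:=f(L_0)\mathbf{1}$ and $\partial f(\partial^2)\mathbf{1}:=G_0f(L_0)\mathbf{1}$ for polynomials $f$ (note $G_0^2=L_0$). Let $\lambda\in\mathbb{C}^*$, $\alpha\in\mathbb{C}$ be such that $L_mf(\partial^2)\mathbf{1}=\lambda^m(\partial^2+m\alpha)f(\partial^2+m)\mathbf{1}$ for all $m\in\mathbb{Z}$ and all polynomials $f$. Then one of the following holds: (a) for all $r\in\frac12+\mathbb{Z}$ and $p\in\frac12\mathbb{Z}$: $G_p\mathbf{1}=\lambda^p\partial\mathbf{1}$, $G_r\partial\mathbf{1}=-\lambda^r(\partial^2+2r\alpha)\mathbf{1}$, $I_r\mathbf{1}=-2\lambda^r\alpha\mathbf{1}$; (b) for all $r\in\frac12+\mathbb{Z}$ and $p\in\frac12\mathbb{Z}$: $G_p\mathbf{1}=(-1)^{2p}\lambda^p\partial\mathbf{1}$, $G_r\partial\mathbf{1}=\lambda^r(\partial^2+2r\alpha)\mathbf{1}$, $I_r\mathbf{1}=2\lambda^r\alpha\mathbf{1}$.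
   Context: The twisted $N=2$ superconformal algebra $\mathcal{T}$ is the Lie superalgebra over $\mathbb{C}$ with basis $\{L_m, I_r, G_p\mid m\in\mathbb{Z}, r\in\frac12+\mathbb{Z}, p\in\frac12\mathbb{Z}\}$, even part spanned by the $L_m,I_r$, odd part by the $G_p$, only nonzero brackets $[L_m,L_n]=(m-n)L_{m+n}$, $[L_m,I_r]=-rI_{m+r}$, $[L_m,G_p]=(\frac m2-p)G_{m+p}$, $[I_r,G_p]=G_{r+p}$, $[G_p,G_q]=(-1)^{2p}2L_{p+q}$ if $p+q\in\mathbb{Z}$, $[G_p,G_q]=(-1)^{2p+1}(p-q)I_{p+q}$ if $p+q\in\frac12+\mathbb{Z}$. A $\mathcal{T}$-module is a $\mathbb{Z}_2$-graded space with $\mathcal{T}_{\bar i}V_{\bar j}\subseteq V_{\bar i+\bar j}$ and $x(yv)-(-1)^{|x||y|}y(xv)=[x,y]v$. For $p\in\frac12\mathbb{Z}$, $\lambda^p$ means $(\lambda^{1/2})^{2p}$ for a fixed square root $\lambda^{1/2}$. *)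

theory Defs
  imports Main "HOL-Computational_Algebra.Polynomial"
begin

text \<open>G k  stands for  G_{k/2}      (k :: int, so p = k/2 ranges over (1/2)Z);
  I j  stands for  I_{j+1/2}    (j :: int, so r = j + 1/2 ranges over 1/2 + Z);
  L m  stands for  L_m.\<close>

definition twisted_N2_module ::
  "(complex \<Rightarrow> 'v::ab_group_add \<Rightarrow> 'v) \<Rightarrow> 'v set \<Rightarrow> 'v set \<Rightarrow>
   (int \<Rightarrow> 'v \<Rightarrow> 'v) \<Rightarrow> (int \<Rightarrow> 'v \<Rightarrow> 'v) \<Rightarrow> (int \<Rightarrow> 'v \<Rightarrow> 'v) \<Rightarrow> bool" where
  "twisted_N2_module smul V0 V1 L I G \<longleftrightarrow>
     Vector_Spaces.vector_space smul \<and>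
     module.subspace smul V0 \<and> module.subspace smul V1 \<and>
     V0 \<inter> V1 = {0} \<and> (\<forall>v. \<exists>a\<in>V0. \<exists>b\<in>V1. v = a + b) \<and>
     (\<forall>m. Vector_Spaces.linear smul smul (L m)) \<and>
     (\<forall>j. Vector_Spaces.linear smul smul (I j)) \<and>
     (\<forall>k. Vector_Spaces.linear smul smul (G k)) \<and>
     (\<forall>m. L m ` V0 \<subseteq> V0 \<and> L m ` V1 \<subseteq> V1) \<and>
     (\<forall>j. I j ` V0 \<subseteq> V0 \<and> I j ` V1 \<subseteq> V1) \<and>
     (\<forall>k. G k ` V0 \<subseteq> V1 \<and> G k ` V1 \<subseteq> V0) \<and>
     \<comment> \<open>[L_m, L_n] = (m-n) L_{m+n}\<close>
     (\<forall>m n v. L m (L n v) - L n (L m v) = smul (of_int (m - n)) (L (m + n) v)) \<and>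
     \<comment> \<open>[L_m, I_r] = -r I_{m+r},  r = j + 1/2\<close>
     (\<forall>m j v. L m (I j v) - I j (L m v) = smul (- (of_int j + 1/2)) (I (j + m) v)) \<and>
     \<comment> \<open>[L_m, G_p] = (m/2 - p) G_{m+p},  p = k/2\<close>
     (\<forall>m k v. L m (G k v) - G k (L m v) =
        smul (of_int m / 2 - of_int k / 2) (G (k + 2 * m) v)) \<and>
     \<comment> \<open>[I_r, I_s] = 0\<close>
     (\<forall>i j v. I i (I j v) - I j (I i v) = 0) \<and>
     \<comment> \<open>[I_r, G_p] = G_{r+p}\<close>
     (\<forall>j k v. I j (G k v) - G k (I j v) = G (2 * j + 1 + k) v) \<and>
     \<comment> \<open>[G_p, G_q] = (-1)^{2p} 2 L_{p+q}  if p+q integer\<close>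
     (\<forall>k l v. even (k + l) \<longrightarrow>
        G k (G l v) + G l (G k v) = smul ((-1) ^ nat \<bar>k\<bar> * 2) (L ((k + l) div 2) v)) \<and>
     \<comment> \<open>[G_p, G_q] = (-1)^{2p+1} (p-q) I_{p+q}  if p+q in 1/2+Z\<close>
     (\<forall>k l v. odd (k + l) \<longrightarrow>
        G k (G l v) + G l (G k v) =
          smul ((-1) ^ nat \<bar>k + 1\<bar> * (of_int k / 2 - of_int l / 2)) (I ((k + l) div 2) v))"

definition polyop :: "(complex \<Rightarrow> 'v::ab_group_add \<Rightarrow> 'v) \<Rightarrow> ('v \<Rightarrow> 'v) \<Rightarrow> complex poly \<Rightarrow> 'v \<Rightarrow> 'v" where
  "polyop smul A f v = (\<Sum>i\<le>degree f. smul (coeff f i) ((A ^^ i) v))"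

end

theory Submission
  imports Defs
begin

locale cvs = vector_space smul for smul :: "complex \<Rightarrow> 'v::ab_group_add \<Rightarrow> 'v" (infixr "*s" 75)
begin

lemma polyop_0[simp]: "polyop smul A 0 v = 0"
  by (simp add: polyop_def)

lemma polyop_eq_sum:
  assumes "degree p \<le> N"
  shows "polyop smul A p v = (\<Sum>i\<le>N. smul (coeff p i) ((A ^^ i) v))"
proof -
  have "(\<Sum>i\<le>N. smul (coeff p i) ((A ^^ i) v)) = (\<Sum>i\<le>degree p. smul (coeff p i) ((A ^^ i) v))"
    using assms by (intro sum.mono_neutral_right) (auto simp: coeff_eq_0)
  thus ?thesis by (simp add: polyop_def)
qed

lemma lin_add: "Vector_Spaces.linear smul smul A \<Longrightarrow> A (x + y) = A x + A y"
  by (simp add: Vector_Spaces.linear_iff)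
lemma lin_scale: "Vector_Spaces.linear smul smul A \<Longrightarrow> A (c *s x) = c *s A x"
  by (simp add: Vector_Spaces.linear_iff)
lemma lin_0: "Vector_Spaces.linear smul smul A \<Longrightarrow> A 0 = 0"
  using lin_add[of A 0 0] by simp
lemma lin_neg: "Vector_Spaces.linear smul smul A \<Longrightarrow> A (- x) = - A x"
  using lin_scale[of A "-1" x] by simp
lemma lin_diff: "Vector_Spaces.linear smul smul A \<Longrightarrow> A (x - y) = A x - A y"
  using lin_add[of A x "-y"] lin_neg[of A y] by simp
lemma lin_sum: "Vector_Spaces.linear smul smul A \<Longrightarrow> A (\<Sum>i\<in>S. f i) = (\<Sum>i\<in>S. A (f i))"
  by (induct S rule: infinite_finite_induct) (auto simp: lin_add lin_0)

lemma polyop_pCons: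
  assumes lin: "Vector_Spaces.linear smul smul A"
  shows "polyop smul A (pCons a p) v = a *s v + A (polyop smul A p v)"
proof -
  let ?N = "Suc (degree p)"
  have "polyop smul A (pCons a p) v = (\<Sum>i\<le>?N. coeff (pCons a p) i *s (A^^i) v)"
    by (rule polyop_eq_sum) (simp add: degree_pCons_le)
  also have "\<dots> = a *s v + (\<Sum>i\<le>degree p. coeff p i *s (A^^Suc i) v)"
    by (subst sum.atMost_Suc_shift) simp
  also have "(\<Sum>i\<le>degree p. coeff p i *s (A^^Suc i) v) = A (polyop smul A p v)"
    by (simp add: polyop_def lin_sum[OF lin] lin_scale[OF lin])
  finally show ?thesis .
qed

context
  fixes A assumes lin: "Vector_Spaces.linear smul smul A"
begin

lemma polyop_const[simp]: "polyop smul A [:a:] v = a *s v"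
  by (simp add: polyop_pCons lin lin_0)

lemma polyop_x: "polyop smul A [:a, b:] v = a *s v + b *s A v"
  by (simp add: polyop_pCons lin lin_0 lin_scale)

lemma polyop_add_v: "polyop smul A p (v + w) = polyop smul A p v + polyop smul A p w"
  by (induct p) (simp_all add: polyop_pCons lin lin_add scale_right_distrib algebra_simps)

lemma polyop_scale_v: "polyop smul A p (c *s v) = c *s polyop smul A p v"
  by (induct p) (simp_all add: polyop_pCons lin lin_add lin_scale scale_right_distrib mult.commute)

lemma polyop_0_v[simp]: "polyop smul A p 0 = 0"
  using polyop_scale_v[of p 0 0] by simp

lemma polyop_add: "polyop smul A (p + q) v = polyop smul A p v + polyop smul A q v"
proof (induct p arbitrary: q)
  case 0 then show ?case by simp
next
  case (pCons a p)
  obtain b q' where q: "q = pCons b q'" by (cases q)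
  show ?case using pCons(2)[of q']
    by (simp add: q polyop_pCons lin lin_add scale_left_distrib algebra_simps)
qed

lemma polyop_smult: "polyop smul A (smult c p) v = c *s polyop smul A p v"
  by (induct p) (simp_all add: polyop_pCons lin lin_add lin_scale scale_right_distrib)

lemma polyop_minus: "polyop smul A (- p) v = - polyop smul A p v"
  using polyop_smult[of "-1" p v] by simp

lemma polyop_diff: "polyop smul A (p - q) v = polyop smul A p v - polyop smul A q v"
  using polyop_add[of p "-q" v] polyop_minus[of q v] by simp

lemma polyop_mult: "polyop smul A (p * q) v = polyop smul A p (polyop smul A q v)"
  by (induct p) (simp_all add: polyop_pCons lin polyop_add polyop_smult)

lemma polyop_comm:
  assumes linX: "Vector_Spaces.linear smul smul X"
    and comm: "\<And>v. X (A v) = A (X v) + c *s X v"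
  shows "X (polyop smul A p v) = polyop smul A (pcompose p [:c, 1:]) (X v)"
proof (induct p)
  case 0 then show ?case by (simp add: lin_0 linX)
next
  case (pCons a p)
  have "X (polyop smul A (pCons a p) v) = a *s X v + (A (X (polyop smul A p v)) + c *s X (polyop smul A p v))"
    by (simp add: polyop_pCons lin lin_add[OF linX] lin_scale[OF linX] comm)
  also have "\<dots> = a *s X v + polyop smul A ([:c, 1:] * pcompose p [:c, 1:]) (X v)"
    by (simp only: polyop_mult polyop_x pCons scale_one add.commute)
  also have "\<dots> = polyop smul A (pcompose (pCons a p) [:c, 1:]) (X v)"
    by (simp add: pcompose_pCons polyop_add del: mult_pCons_left)
  finally show ?case .
qed

end
end


lemma deg1_form: "degree (g::complex poly) \<le> 1 \<Longrightarrow> g = [:coeff g 0, coeff g 1:]"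
  by (rule poly_eqI) (auto simp: coeff_pCons coeff_eq_0 split: nat.split)

lemma deg2_form: "degree (g::complex poly) \<le> 2 \<Longrightarrow> g = [:coeff g 0, coeff g 1, coeff g 2:]"
  by (rule poly_eqI) (auto simp: coeff_pCons coeff_eq_0 split: nat.split simp flip: numeral_2_eq_2)

lemma poly_even:
  fixes g :: "complex poly" and a b c d :: complex
  assumes c: "c \<noteq> 0"
  and eq: "pcompose g [:a,1:] * (smult (2*c) [:b,1:] - [:0,1:] * g) = smult (c^2) [:d,1:]"
  shows "g = [:c:]"
proof -
  have nzr: "smult (c^2) [:d,1:] \<noteq> 0" and drhs: "degree (smult (c^2) [:d,1:]) = 1" using c by auto
  then have nz1: "pcompose g [:a,1:] \<noteq> 0" and nz2: "smult (2*c) [:b,1:] - [:0,1:] * g \<noteq> 0"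
    using eq by auto
  have "degree (pcompose g [:a,1:]) + degree (smult (2*c) [:b,1:] - [:0,1:] * g) = 1"
    using degree_mult_eq[OF nz1 nz2] eq drhs by simp
  moreover have "degree (pcompose g [:a,1:]) = degree g" by (simp add: degree_pcompose)
  ultimately have "degree g \<le> 1" by simp
  then obtain g0 g1 where g: "g = [:g0, g1:]" using deg1_form by blast
  have h: "g1 = 0 \<and> c * (g0 * 2) = g0 * g0 + c^2"
    using eq[unfolded g] by (auto simp: pcompose_pCons algebra_simps)
  have "(g0 - c)^2 = g0 * g0 + c^2 - c * (g0 * 2)" by (simp add: power2_eq_square algebra_simps)
  then have "(g0 - c)^2 = 0" using h by simp
  then show ?thesis using h g by simp
qed

lemma poly_odd:
  fixes g h :: "complex poly" and c La al :: complex
  assumes c0: "c \<noteq> 0" and c1: "c \<noteq> 1" and c2: "c \<noteq> 2" and La: "La \<noteq> 0"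
    and A: "pcompose g [:c,1:] * (smult c h - [:0,1:] * g) = - smult La [:2*c*al,1:]"
    and BD: "[:2*al,1:] * pcompose g [:2,1:] + pcompose g [:2,1:] - pcompose [:2*al,1:] [:c,1:] * g
       = smult (1 - c) (h + g - pcompose h [:2,1:])"
  shows "g = [:coeff g 0:] \<and> (coeff g 0)^2 = La \<and> h = [:-2*al*coeff g 0:]"
proof -
  define Q where "Q = smult c h - [:0,1:] * g"
  have nzr: "- smult La [:2*c*al,1:] \<noteq> 0" and drhs: "degree (- smult La [:2*c*al,1:]) = 1" using La by auto
  then have nz1: "pcompose g [:c,1:] \<noteq> 0" and nz2: "Q \<noteq> 0"
    using A unfolding Q_def by auto
  have "degree (pcompose g [:c,1:]) + degree Q = 1"
    using degree_mult_eq[OF nz1 nz2] A drhs unfolding Q_def by simp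
  moreover have "degree (pcompose g [:c,1:]) = degree g" by (simp add: degree_pcompose)
  ultimately have dg: "degree g \<le> 1" and dQ: "degree Q \<le> 1" by simp_all
  have "smult c h = Q + [:0,1:] * g" unfolding Q_def by simp
  moreover have "degree (Q + [:0,1:] * g) \<le> 2"
    by (rule order.trans[OF degree_add_le]) (use dQ dg degree_mult_le[of "[:0,1:]" g] in auto)
  ultimately have dh: "degree h \<le> 2" using c0 by (metis degree_smult_eq)
  obtain g0 g1 where g: "g = [:g0, g1:]" using deg1_form[OF dg] by blast
  obtain h0 h1 h2 where h: "h = [:h0, h1, h2:]" using deg2_form[OF dh] by blast
  have e: "c * (g0 * h0) + c * (c * (g1 * h0)) = - (La * (al * (c * 2))) \<and>
      La + (c * (g0 * h1) + (c * (g1 * h0) + c * (c * (g1 * h1)))) =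
      g0 * g0 + c * (g0 * g1) \<and>
      (g1 = 0 \<or> c * h2 = g1)"
    using A[unfolded g h] by (simp add: pcompose_pCons algebra_simps)
  have b: "g1 * 2 + (h1 * 2 + (h2 * 4 + al * (g1 * 4))) = c * (h1 * 2) + c * (h2 * 4) \<and>
      g1 * 2 + h2 * 4 = c * (h2 * 4)"
    using BD[unfolded g h] by (simp add: pcompose_pCons algebra_simps)
  have g1: "g1 = 0"
  proof (rule ccontr)
    assume "g1 \<noteq> 0"
    then have gh: "c * h2 = g1" using e by auto
    have "h2 * (4 - 2*c) = (g1*2 + h2*4) - c*(h2*4) - (g1 - c*h2)*2" by (simp add: algebra_simps)
    also have "\<dots> = 0" using b gh by simp
    finally have "h2 = 0" using c2 by simp
    then show False using gh \<open>g1 \<noteq> 0\<close> by simp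
  qed
  have h2: "h2 = 0"
  proof -
    have "h2 * (4 - 4*c) = (g1*2 + h2*4) - c*(h2*4)" using g1 by (simp add: algebra_simps)
    also have "\<dots> = 0" using b by simp
    finally show ?thesis using c1 by simp
  qed
  have h1: "h1 = 0"
  proof -
    have "h1 * (2 - 2*c) = (g1 * 2 + (h1 * 2 + (h2 * 4 + al * (g1 * 4)))) - (c * (h1 * 2) + c * (h2 * 4))"
      using g1 h2 by (simp add: algebra_simps)
    also have "\<dots> = 0" using b by simp
    finally show ?thesis using c1 by simp
  qed
  have g0: "g0 * g0 = La" using e g1 h1 h2 by simp
  then have g0nz: "g0 \<noteq> 0" using La by auto
  have "c * g0 * (h0 + 2 * al * g0) = (c * (g0 * h0) + c * (c * (g1 * h0))) + La * (al * (c * 2))"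
    using g1 g0 by (simp add: algebra_simps)
  also have "\<dots> = 0" using e by simp
  finally have "h0 + 2 * al * g0 = 0" using c0 g0nz by simp
  then have h0: "h0 = - 2 * al * g0" by (simp add: eq_neg_iff_add_eq_0)
  show ?thesis using g h g1 h1 h2 h0 g0 by (simp add: power2_eq_square)
qed

locale tw =
  fixes smul :: "complex \<Rightarrow> 'v::ab_group_add \<Rightarrow> 'v" (infixr "*s" 75)
    and V0 V1 :: "'v set"
    and L I G :: "int \<Rightarrow> 'v \<Rightarrow> 'v"
    and one :: 'v
    and lam mu alpha :: complex
  assumes module: "twisted_N2_module smul V0 V1 L I G"
    and one_even: "one \<in> V0"
    and free: "bij (\<lambda>(f, g). polyop smul (L 0) f one + G 0 (polyop smul (L 0) g one))"
    and lam_nz: "lam \<noteq> 0"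
    and mu_sqrt: "mu ^ 2 = lam"
    and L_action: "\<forall>m f. L m (polyop smul (L 0) f one) =
        smul (lam powi m)
          (polyop smul (L 0) ([:of_int m * alpha, 1:] * pcompose f [:of_int m, 1:]) one)"
begin

sublocale cvs smul
  using module by (simp add: twisted_N2_module_def cvs_def)

lemma linL: "Vector_Spaces.linear smul smul (L m)"
  and linI: "Vector_Spaces.linear smul smul (I j)"
  and linG: "Vector_Spaces.linear smul smul (G k)"
  using module by (simp_all add: twisted_N2_module_def)

lemma subV0: "subspace V0" and subV1: "subspace V1" and V01: "V0 \<inter> V1 = {0}"
  and L_V0: "L m ` V0 \<subseteq> V0" and G_V0: "G k ` V0 \<subseteq> V1"
  using module by (simp_all add: twisted_N2_module_def)

lemma LI: "L m (I j v) - I j (L m v) = (- (of_int j + 1/2)) *s (I (j + m) v)"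
  and LG: "L m (G k v) - G k (L m v) = (of_int m / 2 - of_int k / 2) *s (G (k + 2 * m) v)"
  and IG: "I j (G k v) - G k (I j v) = G (2 * j + 1 + k) v"
  using module unfolding twisted_N2_module_def by blast+

lemma GGe: "even (k + l) \<Longrightarrow> G k (G l v) + G l (G k v) = ((-1) ^ nat \<bar>k\<bar> * 2) *s (L ((k + l) div 2) v)"
  and GGo: "odd (k + l) \<Longrightarrow> G k (G l v) + G l (G k v) =
          ((-1) ^ nat \<bar>k + 1\<bar> * (of_int k / 2 - of_int l / 2)) *s (I ((k + l) div 2) v)"
  using module unfolding twisted_N2_module_def by blast+

lemma neg1_pow: "(-1::complex) ^ nat \<bar>k\<bar> = (if even k then 1 else -1)"
proof -
  have "even (nat \<bar>k\<bar>) \<longleftrightarrow> even k" by (simp add: even_nat_iff)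
  then show ?thesis by (auto simp: neg_one_even_power neg_one_odd_power)
qed

lemma half_eq: "w + w = (2::complex) *s u \<Longrightarrow> w = u"
proof -
  assume h: "w + w = (2::complex) *s u"
  have "(2::complex) *s w = w + w" using scale_left_distrib[of 1 1 w] by simp
  then have "(2::complex) *s w = (2::complex) *s u" using h by simp
  then show "w = u" by simp
qed

lemma diff_solve: "a - b = (- x) *s w \<Longrightarrow> b = a + x *s w"
proof -
  assume h: "a - b = (- x) *s w"
  have "b = a - (a - b)" by simp
  also have "\<dots> = a - ((- x) *s w)" by (simp only: h)
  also have "\<dots> = a + x *s w" by simp
  finally show ?thesis .
qed

definition Ev where "Ev f = polyop smul (L 0) f one"
definition Od where "Od f = G 0 (Ev f)"

lemma E_add: "Ev (p + q) = Ev p + Ev q" and E_smult: "Ev (smult c p) = c *s Ev p"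
  and E_diff: "Ev (p - q) = Ev p - Ev q" and E_minus: "Ev (- p) = - Ev p"
  and E_mult: "polyop smul (L 0) p (Ev q) = Ev (p * q)"
  and E_0: "Ev 0 = 0" and E_1: "Ev 1 = one"
  by (simp_all add: Ev_def polyop_add polyop_smult polyop_diff polyop_minus polyop_mult linL
        flip: pCons_one)

lemma O_add: "Od (p + q) = Od p + Od q" and O_smult: "Od (smult c p) = c *s Od p"
  and O_diff: "Od (p - q) = Od p - Od q" and O_minus: "Od (- p) = - Od p" and O_0: "Od 0 = 0"
  by (simp_all add: Od_def E_add E_smult E_diff E_minus E_0 lin_add lin_scale lin_diff lin_neg lin_0 linG)

lemma L0E: "L 0 (Ev f) = Ev ([:0, 1:] * f)"
  using polyop_x[OF linL[of 0], of 0 1 "Ev f"] by (simp add: E_mult)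

lemma G0L0: "G 0 (L 0 v) = L 0 (G 0 v)"
  using LG[of 0 0 v] by simp

lemma O_mult: "polyop smul (L 0) p (Od q) = Od (p * q)"
proof -
  have "polyop smul (L 0) p (Od q) = G 0 (polyop smul (L 0) p (Ev q))"
    unfolding Od_def using polyop_comm[OF linL[of 0] linG[of 0], of 0 p "Ev q"] by (simp add: G0L0)
  then show ?thesis by (simp add: E_mult Od_def)
qed

lemma inj_free: "inj (\<lambda>(f, g). Ev f + Od g)"
  using free bij_is_inj unfolding Ev_def Od_def by blast

lemma EO_inj: "Ev f + Od g = Ev f' + Od g' \<longleftrightarrow> f = f' \<and> g = g'"
  using inj_free unfolding inj_def by auto

lemma E_inj: "Ev f = Ev f' \<longleftrightarrow> f = f'"
  using EO_inj[of f 0 f' 0] by (simp add: O_0)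

lemma O_inj: "Od f = Od f' \<longleftrightarrow> f = f'"
  using EO_inj[of 0 f 0 f'] by (simp add: E_0)

lemma surj_free: "\<exists>f g. v = Ev f + Od g"
  using free bij_is_surj unfolding Ev_def Od_def surj_def by fastforce

lemma E_V0: "Ev f \<in> V0"
proof (induct f)
  case 0 then show ?case by (simp add: E_0 subspace_0[OF subV0])
next
  case (pCons a p)
  have "Ev (pCons a p) = a *s one + L 0 (Ev p)"
    by (simp add: Ev_def polyop_pCons linL)
  moreover have "L 0 (Ev p) \<in> V0" using L_V0 pCons(2) by blast
  ultimately show ?case
    using subspace_add[OF subV0] subspace_scale[OF subV0] one_even by simp
qed

lemma O_V1: "Od f \<in> V1"
  using G_V0 E_V0 unfolding Od_def by blast

lemma V1_O: assumes "v \<in> V1" shows "\<exists>g. v = Od g"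
proof -
  obtain f g where v: "v = Ev f + Od g" using surj_free by blast
  have "Ev f = v - Od g" using v by simp
  also have "\<dots> \<in> V1" using subspace_diff[OF subV1 assms O_V1] .
  finally have "Ev f = 0" using E_V0[of f] V01 by blast
  then show ?thesis using v by auto
qed

lemma V0_E: assumes "v \<in> V0" shows "\<exists>f. v = Ev f"
proof -
  obtain f g where v: "v = Ev f + Od g" using surj_free by blast
  have "Od g = v - Ev f" using v by simp
  also have "\<dots> \<in> V0" using subspace_diff[OF subV0 assms E_V0] .
  finally have "Od g = 0" using O_V1[of g] V01 by blast
  then show ?thesis using v by auto
qed

definition gg where "gg k = (SOME g. G k one = Od g)"
definition hh where "hh j = (SOME h. I j one = Ev h)"

lemma Gone: "G k one = Od (gg k)"
proof -
  have "G k one \<in> V1" using G_V0 one_even by blast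
  then show ?thesis unfolding gg_def by (rule someI_ex[OF V1_O])
qed

lemma I_V0: "I j ` V0 \<subseteq> V0"
  using module by (simp add: twisted_N2_module_def)

lemma Ione: "I j one = Ev (hh j)"
proof -
  have "I j one \<in> V0" using I_V0 one_even by blast
  then show ?thesis unfolding hh_def by (rule someI_ex[OF V0_E])
qed

lemma GE: "G k (Ev f) = Od (pcompose f [:of_int k / 2, 1:] * gg k)"
proof -
  have c: "G k (L 0 v) = L 0 (G k v) + (of_int k / 2) *s G k v" for v
  proof -
    have "L 0 (G k v) - G k (L 0 v) = (- (of_int k / 2)) *s G k v" using LG[of 0 k v] by simp
    then show ?thesis by (rule diff_solve)
  qed
  have "G k (Ev f) = polyop smul (L 0) (pcompose f [:of_int k / 2, 1:]) (G k one)"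
    unfolding Ev_def using polyop_comm[OF linL[of 0] linG[of k] c, of f one] .
  then show ?thesis by (simp add: Gone O_mult)
qed

lemma IE: "I j (Ev f) = Ev (pcompose f [:of_int j + 1/2, 1:] * hh j)"
proof -
  have c: "I j (L 0 v) = L 0 (I j v) + (of_int j + 1/2) *s I j v" for v
  proof -
    have "L 0 (I j v) - I j (L 0 v) = (- (of_int j + 1/2)) *s I j v" using LI[of 0 j v] by simp
    then show ?thesis by (rule diff_solve)
  qed
  have "I j (Ev f) = polyop smul (L 0) (pcompose f [:of_int j + 1/2, 1:]) (I j one)"
    unfolding Ev_def using polyop_comm[OF linL[of 0] linI[of j] c, of f one] .
  then show ?thesis by (simp add: Ione E_mult)
qed

lemma LE: "L m (Ev f) = lam powi m *s Ev ([:of_int m * alpha, 1:] * pcompose f [:of_int m, 1:])"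
  using L_action unfolding Ev_def by blast

lemma G0O: "G 0 (Od f) = Ev ([:0, 1:] * f)"
proof -
  have e: "even (0 + 0::int)" by simp
  have s: "(-1::complex) ^ nat \<bar>0::int\<bar> * 2 = 2" by simp
  have d: "(0 + 0::int) div 2 = 0" by simp
  have "G 0 (G 0 v) = L 0 v" for v
    using GGe[of 0 0 v, OF e] unfolding s d by (rule half_eq)
  then show ?thesis by (simp add: Od_def L0E)
qed

lemma sum_solve: "(a::'v) + b = c \<Longrightarrow> a = - b + c"
  by (metis add.commute add_diff_cancel_left' diff_conv_add_uminus)

lemma GO_even: "G (2 * n) (Od f) = - G 0 (G (2 * n) (Ev f)) + 2 *s L n (Ev f)"
proof -
  have s: "(-1::complex) ^ nat \<bar>2 * n\<bar> * 2 = 2" by (simp add: neg1_pow)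
  have d: "(2 * n + 0) div 2 = n" by simp
  have "G (2 * n) (G 0 (Ev f)) + G 0 (G (2 * n) (Ev f)) = 2 *s L n (Ev f)"
    using GGe[of "2 * n" 0 "Ev f"] by (simp only: s d) simp
  then show ?thesis unfolding Od_def by (rule sum_solve)
qed

lemma GO_odd: "G (2 * j + 1) (Od f) = - G 0 (G (2 * j + 1) (Ev f)) + (of_int (2 * j + 1) / 2) *s I j (Ev f)"
proof -
  have d: "(2 * j + 1) div 2 = j" by presburger
  have e: "(-1::complex) ^ nat \<bar>2 * j + 1 + 1\<bar> = 1" by (simp add: neg1_pow)
  have e2: "(-1::complex) ^ nat \<bar>2 * j + 1 + 1\<bar> * (of_int (2 * j + 1) / 2 - of_int 0 / 2) = of_int (2 * j + 1) / 2"
    by (simp only: e) simp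
  have o: "odd (2 * j + 1 + 0)" by presburger
  have "G (2 * j + 1) (G 0 (Ev f)) + G 0 (G (2 * j + 1) (Ev f)) =
    ((-1) ^ nat \<bar>2 * j + 1 + 1\<bar> * (of_int (2 * j + 1) / 2 - of_int 0 / 2)) *s I ((2 * j + 1 + 0) div 2) (Ev f)"
    by (rule GGo[OF o])
  also have "\<dots> = (of_int (2 * j + 1) / 2) *s I j (Ev f)"
    unfolding e2 add_0_right d ..
  finally have "G (2 * j + 1) (G 0 (Ev f)) + G 0 (G (2 * j + 1) (Ev f)) = (of_int (2 * j + 1) / 2) *s I j (Ev f)" .
  then show ?thesis unfolding Od_def by (rule sum_solve)
qed

lemma IO: "I j (Od f) = G 0 (I j (Ev f)) + G (2 * j + 1) (Ev f)"
  using IG[of j 0 "Ev f"] unfolding Od_def by (metis add.commute diff_eq_eq add_0_right)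

lemma LO: "L m (Od f) = G 0 (L m (Ev f)) + (of_int m / 2) *s G (2 * m) (Ev f)"
proof -
  have "L m (G 0 (Ev f)) - G 0 (L m (Ev f)) = (of_int m / 2) *s G (2 * m) (Ev f)"
    using LG[of m 0 "Ev f"] by (simp only: of_int_0 div_0 diff_0_right add_0_left)
  then show ?thesis unfolding Od_def by (metis diff_eq_eq add.commute)
qed


lemma half_neg: "w + w = (-2::complex) *s u \<Longrightarrow> w = - u"
  using half_eq[of w "-u"] by simp

lemma GG_even: "G (2*n) (G (2*n) one) = L (2*n) one"
proof -
  have e: "even (2*n + 2*n)" by simp
  have s: "(-1::complex) ^ nat \<bar>2*n\<bar> * 2 = 2" by (simp add: neg1_pow)
  have d: "(2*n + 2*n) div 2 = 2*n" by simp
  show ?thesis using GGe[of "2*n" "2*n" one, OF e] unfolding s d by (rule half_eq)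
qed

lemma GG_odd: "G (2*j+1) (G (2*j+1) one) = - L (2*j+1) one"
proof -
  have e: "even (2*j+1 + (2*j+1))" by presburger
  have s: "(-1::complex) ^ nat \<bar>2*j+1\<bar> * 2 = -2" by (simp add: neg1_pow)
  have d: "(2*j+1 + (2*j+1)) div 2 = 2*j+1" by presburger
  show ?thesis using GGe[of "2*j+1" "2*j+1" one, OF e] unfolding s d by (rule half_neg)
qed

lemma Lone: "L m one = lam powi m *s Ev [:of_int m * alpha, 1:]"
  using LE[of m 1] E_1 by (simp add: pcompose_1)

lemma G0_scale_E: "G 0 (c *s Ev p) = c *s Od p"
  by (simp add: Od_def lin_scale[OF linG])

lemma powi_nz: "lam powi n \<noteq> 0"
  using lam_nz by simp

lemma even_g: "gg (2*n) = [:lam powi n:]"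
proof -
  define g where "g = gg (2*n)"
  define s where "s = pcompose g [:of_int n, 1:]"
  define c where "c = lam powi n"
  have h2: "of_int (2*n) / 2 = (of_int n :: complex)" by simp
  have "G (2*n) (G (2*n) one) = - Ev ([:0,1:] * (s * g)) + 2 *s (c *s Ev ([:of_int n * alpha, 1:] * s))"
    by (simp only: Gone g_def[symmetric] GO_even GE G0O LE h2 s_def c_def)
  also have "\<dots> = Ev (- ([:0,1:] * (s * g)) + smult (2 * c) ([:of_int n * alpha, 1:] * s))"
    by (simp only: E_add E_minus E_smult scale_scale)
  finally have L: "G (2*n) (G (2*n) one) = Ev (- ([:0,1:] * (s * g)) + smult (2 * c) ([:of_int n * alpha, 1:] * s))" .
  have R: "L (2*n) one = Ev (smult (c^2) [:of_int (2*n) * alpha, 1:])"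
  proof -
    have cc: "c^2 = lam powi (2*n)" by (simp add: c_def power_int_power' mult.commute)
    show ?thesis using Lone[of "2*n"] by (simp only: E_smult cc)
  qed
  have "- ([:0,1:] * (s * g)) + smult (2 * c) ([:of_int n * alpha, 1:] * s) = smult (c^2) [:of_int (2*n) * alpha, 1:]"
    using L R GG_even[of n] E_inj by metis
  moreover have "s * (smult (2 * c) [:of_int n * alpha, 1:] - [:0,1:] * g) = - ([:0,1:] * (s * g)) + smult (2 * c) ([:of_int n * alpha, 1:] * s)"
    by (simp only: right_diff_distrib mult_smult_right mult.commute mult.left_commute) simp
  ultimately have "pcompose g [:of_int n, 1:] * (smult (2 * c) [:of_int n * alpha, 1:] - [:0,1:] * g) = smult (c^2) [:of_int (2*n) * alpha, 1:]"
    unfolding s_def by simp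
  from poly_even[OF _ this] show ?thesis using powi_nz unfolding g_def c_def by simp
qed


lemma D_gen: "gg (2*j+1+2*n) = smult (lam powi n) (hh j + gg (2*j+1) - pcompose (hh j) [:of_int n, 1:])"
proof -
  define c where "c = lam powi n"
  have h2: "of_int (2*n) / 2 = (of_int n :: complex)" by simp
  have l: "I j (G (2*n) one) = Od ([:c:] * hh j) + Od ([:c:] * gg (2*j+1))"
    by (simp only: Gone[of "2*n"] even_g c_def[symmetric] IO IE GE[of "2*j+1"] pcompose_const Od_def[symmetric])
  have r: "G (2*n) (I j one) = Od (pcompose (hh j) [:of_int n, 1:] * [:c:])"
    by (simp only: Ione GE[of "2*n"] h2 even_g c_def[symmetric])
  have "Od (gg (2*j+1+2*n)) = Od ([:c:] * hh j) + Od ([:c:] * gg (2*j+1)) - Od (pcompose (hh j) [:of_int n, 1:] * [:c:])"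
    using IG[of j "2*n" one] l r Gone[of "2*j+1+2*n"] by simp
  also have "\<dots> = Od ([:c:] * hh j + [:c:] * gg (2*j+1) - pcompose (hh j) [:of_int n, 1:] * [:c:])"
    by (simp only: O_add O_diff)
  finally have "gg (2*j+1+2*n) = [:c:] * hh j + [:c:] * gg (2*j+1) - pcompose (hh j) [:of_int n, 1:] * [:c:]"
    by (simp only: O_inj)
  then show ?thesis unfolding c_def by (simp add: smult_add_right smult_diff_right mult.commute)
qed

lemma odd_main:
  "gg (2*j+1) = [:coeff (gg (2*j+1)) 0:] \<and> (coeff (gg (2*j+1)) 0)^2 = lam powi (2*j+1)
     \<and> hh j = [:-2*alpha*coeff (gg (2*j+1)) 0:]"
proof -
  define g where "g = gg (2*j+1)"
  define h where "h = hh j"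
  define c where "c = (of_int (2*j+1) / 2 :: complex)"
  define La where "La = lam powi (2*j+1)"
  define La2 where "La2 = lam powi 2"
  have cj: "of_int j + 1/2 = c" by (simp add: c_def field_simps)
  have c2: "of_int (2*j+1) * alpha = 2*c*alpha" by (simp add: c_def)
  have cne: "c \<noteq> 0" "c \<noteq> 1" "c \<noteq> 2"
  proof -
    have a: "(of_int (2*j+1) :: complex) \<noteq> of_int 0" "(of_int (2*j+1) :: complex) \<noteq> of_int 2"
      "(of_int (2*j+1) :: complex) \<noteq> of_int 4"
      by (simp_all only: of_int_eq_iff) presburger+
    show "c \<noteq> 0" "c \<noteq> 1" "c \<noteq> 2" using a by (auto simp: c_def)
  qed
  have "G (2*j+1) (G (2*j+1) one) = - Ev ([:0,1:] * (pcompose g [:c,1:] * g)) + c *s Ev (pcompose g [:c,1:] * h)"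
    by (simp only: Gone[of "2*j+1"] g_def[symmetric] h_def[symmetric] GO_odd GE[of "2*j+1"] G0O IE cj c_def[symmetric])
  also have "\<dots> = Ev (- ([:0,1:] * (pcompose g [:c,1:] * g)) + smult c (pcompose g [:c,1:] * h))"
    by (simp only: E_add E_minus E_smult)
  finally have lA: "G (2*j+1) (G (2*j+1) one) = Ev (- ([:0,1:] * (pcompose g [:c,1:] * g)) + smult c (pcompose g [:c,1:] * h))" .
  have rA: "- L (2*j+1) one = Ev (- smult La [:2*c*alpha, 1:])"
    by (simp only: Lone La_def[symmetric] c2 E_minus E_smult)
  have pA: "- ([:0,1:] * (pcompose g [:c,1:] * g)) + smult c (pcompose g [:c,1:] * h) = - smult La [:2*c*alpha, 1:]"
    using lA rA GG_odd[of j] E_inj by metis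
  have A: "pcompose g [:c,1:] * (smult c h - [:0,1:] * g) = - smult La [:2*c*alpha, 1:]"
  proof -
    have "pcompose g [:c,1:] * (smult c h - [:0,1:] * g) = - ([:0,1:] * (pcompose g [:c,1:] * g)) + smult c (pcompose g [:c,1:] * h)"
      by (simp only: right_diff_distrib mult_smult_right mult.commute mult.left_commute) simp
    then show ?thesis using pA by simp
  qed
  have n0: "(2 :: complex) / 2 = 1" by simp
  have n1: "(of_int 2 :: complex) / 2 = 1" and n2: "(of_int (2*2) :: complex) / 2 = 2" and n3: "(of_int 2 :: complex) = 2"
    by simp_all
  define BL where "BL = [:2*alpha,1:] * pcompose g [:2,1:] + pcompose g [:2,1:] - pcompose [:2*alpha,1:] [:c,1:] * g"
  have lB: "L 2 (G (2*j+1) one) - G (2*j+1) (L 2 one) =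
      La2 *s Od ([:2 * alpha, 1:] * pcompose g [:2, 1:]) + 1 *s Od (pcompose g [:2, 1:] * [:La2:])
      - La2 *s Od (pcompose [:2 * alpha, 1:] [:c, 1:] * g)"
    by (simp only: Gone[of "2*j+1"] g_def[symmetric] LO LE G0_scale_E GE[of "2*2"] GE[of "2*j+1"] even_g[of 2]
        Lone lin_scale[OF linG] n0 n1 n2 n3 La2_def[symmetric] Od_def[symmetric] c_def[symmetric] mult.commute[of 2 alpha])
  also have "\<dots> = Od (smult La2 BL)"
    unfolding BL_def by (simp only: O_add[symmetric] O_diff[symmetric] O_smult[symmetric] O_inj) (simp add: algebra_simps smult_add_right smult_diff_right)
  finally have lB2: "L 2 (G (2*j+1) one) - G (2*j+1) (L 2 one) = Od (smult La2 BL)" .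
  have "Od (smult La2 BL) = (1 - c) *s Od (gg (2*j+1+2*2))"
    using LG[of 2 "2*j+1" one] lB2 Gone[of "2*j+1+2*2"] n1 c_def by simp
  also have "\<dots> = Od (smult (1 - c) (smult La2 (h + g - pcompose h [:2, 1:])))"
    using D_gen[of j 2] by (simp add: O_smult g_def h_def La2_def)
  finally have "smult La2 BL = smult La2 (smult (1 - c) (h + g - pcompose h [:2, 1:]))"
    by (simp add: O_inj mult.commute)
  then have BD: "BL = smult (1 - c) (h + g - pcompose h [:2, 1:])"
    by (rule smult_cancel[rotated]) (simp add: La2_def lam_nz)
  have "g = [:coeff g 0:] \<and> (coeff g 0)^2 = La \<and> h = [:-2*alpha*coeff g 0:]"
    by (rule poly_odd[OF cne powi_nz[of "2*j+1", folded La_def] A BD[unfolded BL_def]])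
  then show ?thesis unfolding g_def h_def La_def .
qed


lemma G0one: "G 0 one = Od 1"
  using Gone[of 0] even_g[of 0] by (simp add: pCons_one)

lemma Ev_lin: "Ev (smult a [:b, 1:]) = a *s (L 0 one + b *s one)"
proof -
  have "[:b, 1:] = [:0, 1:] + smult b 1" by (simp add: pCons_one)
  then have "Ev (smult a [:b, 1:]) = a *s (Ev ([:0, 1:] * 1) + b *s Ev 1)"
    by (simp only: E_add E_smult mult_1_right)
  then show ?thesis by (simp only: L0E[of 1, symmetric] E_1)
qed

lemma Ev_const: "Ev [:a:] = a *s one"
  using E_smult[of a 1] E_1 by (simp add: pCons_one)

lemma Od_const: "Od [:a:] = a *s G 0 one"
  using O_smult[of a 1] G0one by (simp add: pCons_one)

lemma coeff_odd: "coeff (gg (2*j+1)) 0 = lam powi j * coeff (gg 1) 0"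
proof -
  obtain a where a: "hh 0 = [:a:]" using odd_main[of 0] by auto
  have "gg (2*0+1+2*j) = smult (lam powi j) (hh 0 + gg (2*0+1) - pcompose (hh 0) [:of_int j, 1:])"
    by (rule D_gen)
  then have "gg (2*j+1) = smult (lam powi j) (gg 1)" using a by (simp add: add.commute)
  then show ?thesis by simp
qed

lemma G_odd_G0: "G (2*j+1) (G 0 one) = (- coeff (gg (2*j+1)) 0) *s (L 0 one + (of_int (2*j+1) * alpha) *s one)"
proof -
  define e where "e = coeff (gg (2*j+1)) 0"
  have g: "gg (2*j+1) = [:e:]" and h: "hh j = [:-2*alpha*e:]" using odd_main[of j] unfolding e_def by auto
  have "G (2*j+1) (G 0 one) = - Ev ([:0,1:] * [:e:]) + (of_int (2*j+1) / 2) *s Ev [:-2*alpha*e:]"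
    by (simp only: G0one GO_odd GE[of "2*j+1"] IE pcompose_1 mult_1_left g h G0O)
  also have "\<dots> = Ev (- ([:0,1:] * [:e:]) + smult (of_int (2*j+1) / 2) [:-2*alpha*e:])"
    by (simp only: E_add E_minus E_smult)
  also have "- ([:0,1:] * [:e:]) + smult (of_int (2*j+1) / 2) [:-2*alpha*e:] = smult (-e) [:of_int (2*j+1) * alpha, 1:]"
    by (simp add: field_simps)
  finally show ?thesis unfolding e_def by (simp only: Ev_lin)
qed

lemma main:
  "(\<forall>j k. G k one = smul (mu powi k) (G 0 one) \<and>
            G (2 * j + 1) (G 0 one) =
              - smul (mu powi (2 * j + 1)) (L 0 one + smul (of_int (2 * j + 1) * alpha) one) \<and>
            I j one = smul (- 2 * mu powi (2 * j + 1) * alpha) one)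
       \<or> (\<forall>j k. G k one = smul ((-1) ^ nat \<bar>k\<bar> * mu powi k) (G 0 one) \<and>
            G (2 * j + 1) (G 0 one) =
              smul (mu powi (2 * j + 1)) (L 0 one + smul (of_int (2 * j + 1) * alpha) one) \<and>
            I j one = smul (2 * mu powi (2 * j + 1) * alpha) one)"
proof -
  have mu_nz: "mu \<noteq> 0" using mu_sqrt lam_nz by auto
  have lm: "lam powi n = mu powi (2*n)" for n
    by (simp add: power_int_mult mu_sqrt[symmetric])
  have lmo: "lam powi n * mu = mu powi (2*n+1)" for n
    using mu_nz by (simp add: lm power_int_add_1)
  define e1 where "e1 = coeff (gg 1) 0"
  have "e1^2 = lam" using odd_main[of 0] unfolding e1_def by simp
  then have "(e1 - mu) * (e1 + mu) = 0" using mu_sqrt by (simp add: power2_eq_square algebra_simps)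
  then have sgn: "e1 = mu \<or> e1 = - mu" by (auto simp: eq_neg_iff_add_eq_0)
  have ek: "coeff (gg (2*j+1)) 0 = lam powi j * e1" for j
    unfolding e1_def by (rule coeff_odd)
  have hj: "I j one = (-2*alpha*(lam powi j * e1)) *s one" for j
    using odd_main[of j] Ione[of j] ek[of j] Ev_const by metis
  have Gk: "G k one = (if even k then lam powi (k div 2) else lam powi (k div 2) * e1) *s G 0 one" for k
  proof (cases "even k")
    case True
    then obtain n where k: "k = 2*n" by blast
    show ?thesis using Gone[of k] even_g[of n] Od_const k True by simp
  next
    case False
    then obtain n where k: "k = 2*n+1" using oddE by blast
    have "k div 2 = n" using k by simp
    then show ?thesis using Gone[of k] odd_main[of n] ek[of n] Od_const k False by metis
  qed
  have Gk2: "G k one = (if even k then mu powi k else mu powi k * (e1 / mu)) *s G 0 one" for k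
  proof (cases "even k")
    case True
    then obtain n where k: "k = 2*n" by blast
    show ?thesis using Gk[of k] lm[of n] k by simp
  next
    case False
    then obtain n where k: "k = 2*n+1" using oddE by blast
    have "k div 2 = n" using k by simp
    moreover have "lam powi n * e1 = mu powi k * (e1 / mu)"
      using lmo[of n] k mu_nz by (simp add: field_simps)
    ultimately show ?thesis using Gk[of k] False by simp
  qed
  from sgn show ?thesis
  proof
    assume e: "e1 = mu"
    show ?thesis
    proof (rule disjI1, intro allI conjI)
      fix j k :: int
      show "G k one = mu powi k *s G 0 one" using Gk2[of k] e mu_nz by simp
      show "G (2 * j + 1) (G 0 one) = - (mu powi (2 * j + 1) *s (L 0 one + (of_int (2 * j + 1) * alpha) *s one))"
        using G_odd_G0[of j] ek[of j] e lmo[of j] by simp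
      show "I j one = (- 2 * mu powi (2 * j + 1) * alpha) *s one"
        using hj[of j] e lmo[of j] by (simp add: mult_ac)
    qed
  next
    assume e: "e1 = - mu"
    show ?thesis
    proof (rule disjI2, intro allI conjI)
      fix j k :: int
      show "G k one = ((-1) ^ nat \<bar>k\<bar> * mu powi k) *s G 0 one" using Gk2[of k] e mu_nz by (simp add: neg1_pow)
      show "G (2 * j + 1) (G 0 one) = mu powi (2 * j + 1) *s (L 0 one + (of_int (2 * j + 1) * alpha) *s one)"
        using G_odd_G0[of j] ek[of j] e lmo[of j] by simp
      show "I j one = (2 * mu powi (2 * j + 1) * alpha) *s one"
        using hj[of j] e lmo[of j] by (simp add: mult_ac)
    qed
  qed
qed
end


theorem lemma3p2:
  fixes smul :: "complex \<Rightarrow> 'v::ab_group_add \<Rightarrow> 'v"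
    and V0 V1 :: "'v set"
    and L I G :: "int \<Rightarrow> 'v \<Rightarrow> 'v"
    and one :: 'v
    and lam mu alpha :: complex
  assumes module: "twisted_N2_module smul V0 V1 L I G"
    and one_even: "one \<in> V0"
    and free: "bij (\<lambda>(f, g). polyop smul (L 0) f one + G 0 (polyop smul (L 0) g one))"
    and lam_nz: "lam \<noteq> 0"
    and mu_sqrt: "mu ^ 2 = lam"
    and L_action: "\<forall>m f. L m (polyop smul (L 0) f one) =
        smul (lam powi m)
          (polyop smul (L 0) ([:of_int m * alpha, 1:] * pcompose f [:of_int m, 1:]) one)"
  shows "(\<forall>j k. G k one = smul (mu powi k) (G 0 one) \<and>
            G (2 * j + 1) (G 0 one) =
              - smul (mu powi (2 * j + 1)) (L 0 one + smul (of_int (2 * j + 1) * alpha) one) \<and>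
            I j one = smul (- 2 * mu powi (2 * j + 1) * alpha) one)
       \<or> (\<forall>j k. G k one = smul ((-1) ^ nat \<bar>k\<bar> * mu powi k) (G 0 one) \<and>
            G (2 * j + 1) (G 0 one) =
              smul (mu powi (2 * j + 1)) (L 0 one + smul (of_int (2 * j + 1) * alpha) one) \<and>
            I j one = smul (2 * mu powi (2 * j + 1) * alpha) one)"
proof -
  interpret T: tw smul V0 V1 L I G one lam mu alpha
    using module one_even free lam_nz mu_sqrt L_action by (simp add: tw_def)
  show ?thesis by (rule T.main)
qed

end
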